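(* Let $r\in\mathbb{R}$ and $\sigma_0>0$, $\alpha_0\in\mathbb{C}$. Consider Bayesian estimation of an unknown displacement $\alpha=\alpha_{\mathrm R}+i\alpha_{\mathrm I}\in\mathbb{C}$ with the Gaussian prior density $$p(\alpha)=\frac{1}{2\pi\sigma_0^2}\exp\!\Big(-\frac{|\alpha-\alpha_0|^2}{2\sigma_0^2}\Big)$$ (with respect to $d\alpha=d\alpha_{\mathrm R}\,d\alpha_{\mathrm I}$), where the probe is the squeezed vacuum $|\xi\rangle=\hat S(r)|0\rangle$ (real squeezing parameter $\xi=r$), the encoded state is $\hat D(\alpha)|\xi\rangle$, and the measurement is heterodyne detection, i.e. the POVM $\{\tfrac1\pi|\beta\rangle\langle\beta|\}_{\beta\in\mathbb{C}}$ with $|\beta\rangle$ coherent states, so that the likelihood is $p(\beta|\alpha)=\tfrac1\pi|\langle\beta|\hat D(\alpha)|\xi\rangle|^2$. Then for every outcome $\beta=\beta_{\mathrm R}+i\beta_{\mathrm I}$ the posterior $p(\alpha|\beta)$ is a product of independent Gaussian distributions in $\alpha_{\mathrm R}$ and $\alpha_{\mathrm I}$ with means $$\hat\alpha_{\mathrm R}(\beta)=\frac{4\beta_{\mathrm R}\sigma_0^2+\alpha_{0,\mathrm R}(1+e^{-2r})}{4\sigma_0^2+1+e^{-2r}},\qquad \hat\alpha_{\mathrm I}(\beta)=\frac{4\beta_{\mathrm I}\sigma_0^2+\alpha_{0,\mathrm I}(1+e^{2r})}{4\sigma_0^2+1+e^{2r}}$$ and variances $$\Big[\frac{1}{\sigma_0^2}+2(1+\tanh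 r)\Big]^{-1}\ \text{(real part)},\qquad \Big[\frac{1}{\sigma_0^2}+2(1-\tanh r)\Big]^{-1}\ \text{(imaginary part)}.$$ Consequently the total posterior variance $\int d\alpha\,p(\alpha|\beta)\,|\alpha-\hat\alpha(\beta)|^2$, with $\hat\alpha=\hat\alpha_{\mathrm R}+i\hat\alpha_{\mathrm I}$, is independent of $\beta$ and hence equals its average $\bar V_{\mathrm{post}}(r)$ over outcomes, and $$\bar V_{\mathrm{post}}(r)\ \ge\ \bar V_{\mathrm{post}}(0)=\frac{2\sigma_0^2}{1+2\sigma_0^2}\qquad\text{for all } r\in\mathbb{R}.$$
   Context: Single bosonic mode with annihilation operator $\hat a$, $[\hat a,\hat a^\dagger]=1$, quadratures $\hat q=(\hat a+\hat a^\dagger)/\sqrt2$, $\hat p=i(\hat a^\dagger-\hat a)/\sqrt2$. Displacement operator $\hat D(\alpha)=\exp(\alpha\hat a^\dagger-\alpha^*\hat a)$; coherent state $|\beta\rangle=\hat D(\beta)|0\rangle$ with $|0\rangle$ the vacuum. Squeezing operator $\hat S(\xi)=\exp[\tfrac12(\xi^*\hat a^2-\xi\hat a^{\dagger 2})]$; for real $r$ the state $\hat S(r)|0\rangle$ has $\hat q$-variance $e^{-2r}/2$ and $\hat p$-variance $e^{2r}/2$. Bayesian setting: posterior $p(\alpha|\beta)=p(\beta|\alpha)p(\alpha)/p(\beta)$ with $p(\beta)=\int d\alpha\,p(\beta|\alpha)p(\alpha)$; the average posterior variance is $\bar V_{\mathrm{post}}=\int d^2\beta\,p(\beta)\int d\alpha\,p(\alpha|\beta)|\alpha-\hat\alpha(\beta)|^2$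 with $\hat\alpha(\beta)$ the posterior mean. *)

theory Defs
  imports "HOL-Probability.Probability"
begin

text \<open>Schroedinger (position) representation of the single bosonic mode:
  states are wavefunctions real \<Rightarrow> complex, with q = (a + a^dagger)/sqrt 2 acting by
  multiplication and p = -i d/dq.\<close>

definition vac :: "real \<Rightarrow> complex" where
  "vac q = complex_of_real (pi powr (-1/4) * exp (-(q\<^sup>2) / 2))"

text \<open>Squeezing operator S(r) for real r: acts as the unitary dilation
  (S(r) psi)(q) = e^(r/2) psi(e^r q); S(r)|0> has q-variance e^(-2r)/2.\<close>
definition squeeze :: "real \<Rightarrow> (real \<Rightarrow> complex) \<Rightarrow> real \<Rightarrow> complex" where
  "squeeze r \<psi> q = complex_of_real (exp (r / 2)) * \<psi> (exp r * q)"

text \<open>Displacement operator D(alpha) = exp(i(p0 q - q0 p)) with q0 = sqrt 2 Re alpha,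
  p0 = sqrt 2 Im alpha:  (D(alpha) psi)(q) = e^(-i p0 q0/2) e^(i p0 q) psi(q - q0).\<close>
definition displace :: "complex \<Rightarrow> (real \<Rightarrow> complex) \<Rightarrow> real \<Rightarrow> complex" where
  "displace \<alpha> \<psi> q =
     (let q0 = sqrt 2 * Re \<alpha>; p0 = sqrt 2 * Im \<alpha>
      in cis (p0 * q - p0 * q0 / 2) * \<psi> (q - q0))"

definition coherent :: "complex \<Rightarrow> real \<Rightarrow> complex" where
  "coherent \<beta> = displace \<beta> vac"

definition braket :: "(real \<Rightarrow> complex) \<Rightarrow> (real \<Rightarrow> complex) \<Rightarrow> complex" where
  "braket \<phi> \<psi> = (LINT q|lborel. cnj (\<phi> q) * \<psi> q)"

definition likelihood :: "real \<Rightarrow> complex \<Rightarrow> complex \<Rightarrow> real" where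
  "likelihood r \<beta> \<alpha> = (1 / pi) * (cmod (braket (coherent \<beta>) (displace \<alpha> (squeeze r vac))))\<^sup>2"

definition prior :: "real \<Rightarrow> complex \<Rightarrow> complex \<Rightarrow> real" where
  "prior \<sigma>0 \<alpha>0 \<alpha> = 1 / (2 * pi * \<sigma>0\<^sup>2) * exp (- (cmod (\<alpha> - \<alpha>0))\<^sup>2 / (2 * \<sigma>0\<^sup>2))"

definition evidence :: "real \<Rightarrow> real \<Rightarrow> complex \<Rightarrow> complex \<Rightarrow> real" where
  "evidence r \<sigma>0 \<alpha>0 \<beta> = (LINT \<alpha>|lborel. likelihood r \<beta> \<alpha> * prior \<sigma>0 \<alpha>0 \<alpha>)"

definition posterior :: "real \<Rightarrow> real \<Rightarrow> complex \<Rightarrow> complex \<Rightarrow> complex \<Rightarrow> real" where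
  "posterior r \<sigma>0 \<alpha>0 \<beta> \<alpha> = likelihood r \<beta> \<alpha> * prior \<sigma>0 \<alpha>0 \<alpha> / evidence r \<sigma>0 \<alpha>0 \<beta>"

definition post_mean :: "real \<Rightarrow> real \<Rightarrow> complex \<Rightarrow> complex \<Rightarrow> complex" where
  "post_mean r \<sigma>0 \<alpha>0 \<beta> = (LINT \<alpha>|lborel. posterior r \<sigma>0 \<alpha>0 \<beta> \<alpha> *\<^sub>R \<alpha>)"

definition post_var :: "real \<Rightarrow> real \<Rightarrow> complex \<Rightarrow> complex \<Rightarrow> real" where
  "post_var r \<sigma>0 \<alpha>0 \<beta> =
     (LINT \<alpha>|lborel. posterior r \<sigma>0 \<alpha>0 \<beta> \<alpha> * (cmod (\<alpha> - post_mean r \<sigma>0 \<alpha>0 \<beta>))\<^sup>2)"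

definition avg_post_var :: "real \<Rightarrow> real \<Rightarrow> complex \<Rightarrow> real" where
  "avg_post_var r \<sigma>0 \<alpha>0 = (LINT \<beta>|lborel. evidence r \<sigma>0 \<alpha>0 \<beta> * post_var r \<sigma>0 \<alpha>0 \<beta>)"

end

theory Submission
  imports Defs
begin



lemma Complex_pair_measurable[measurable]:
  "(\<lambda>z. Complex (fst z) (snd z)) \<in> borel_measurable (lborel \<Otimes>\<^sub>M lborel)"
  unfolding Complex_eq by measurable

lemma lborel_complex_distr:
  "(lborel :: complex measure) = distr (lborel \<Otimes>\<^sub>M lborel) borel (\<lambda>z. Complex (fst z) (snd z))"
proof (rule lborel_eqI)
  fix l u :: complex
  assume lu: "\<And>b. b \<in> Basis \<Longrightarrow> l \<bullet> b \<le> u \<bullet> b"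
  then have le: "Re l \<le> Re u" "Im l \<le> Im u"
    using lu[of 1] lu[of \<i>] by (auto simp: Basis_complex_def inner_complex_def)
  have pre: "(\<lambda>z. Complex (fst z) (snd z)) -` box l u \<inter> space (lborel \<Otimes>\<^sub>M lborel)
      = {Re l<..<Re u} \<times> {Im l<..<Im u}"
    by (auto simp: box_def Basis_complex_def space_pair_measure)
  show "emeasure (distr (lborel \<Otimes>\<^sub>M lborel) borel (\<lambda>z. Complex (fst z) (snd z))) (box l u) =
        ennreal (\<Prod>b\<in>Basis. (u - l) \<bullet> b)"
    using le
    by (subst emeasure_distr[OF Complex_pair_measurable]) (auto simp: pre lborel.emeasure_pair_measure_Times Basis_complex_def ennreal_mult)
qed simp

lemma integral_complex_pair:
  fixes f :: "complex \<Rightarrow> 'b::{banach, second_countable_topology}"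
  assumes [measurable]: "f \<in> borel_measurable borel"
  shows "integral\<^sup>L lborel f = integral\<^sup>L (lborel \<Otimes>\<^sub>M lborel) (\<lambda>z. f (Complex (fst z) (snd z)))"
  by (subst lborel_complex_distr) (simp add: integral_distr comp_def)

lemma integral_product:
  fixes f g :: "real \<Rightarrow> real"
  assumes f: "integrable lborel f" and g: "integrable lborel g"
  shows "integrable (lborel \<Otimes>\<^sub>M lborel) (\<lambda>z. f (fst z) * g (snd z))"
    and "integral\<^sup>L (lborel \<Otimes>\<^sub>M lborel) (\<lambda>z. f (fst z) * g (snd z)) = integral\<^sup>L lborel f * integral\<^sup>L lborel g"
proof -
  have [measurable]: "f \<in> borel_measurable borel" "g \<in> borel_measurable borel"
    using f g by auto
  show I: "integrable (lborel \<Otimes>\<^sub>M lborel) (\<lambda>z. f (fst z) * g (snd z))"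
  proof (rule lborel_pair.Fubini_integrable)
    show "(\<lambda>z. f (fst z) * g (snd z)) \<in> borel_measurable (lborel \<Otimes>\<^sub>M lborel)" by measurable
    have "(\<lambda>x. LINT y|lborel. norm (f (fst (x, y)) * g (snd (x, y)))) = (\<lambda>x. \<bar>f x\<bar> * (LINT y|lborel. \<bar>g y\<bar>))"
      by (simp add: abs_mult)
    then show "integrable lborel (\<lambda>x. LINT y|lborel. norm (f (fst (x, y)) * g (snd (x, y))))"
      using f by (simp add: integrable_abs)
    show "AE x in lborel. integrable lborel (\<lambda>y. f (fst (x, y)) * g (snd (x, y)))"
      using g by simp
  qed
  show "integral\<^sup>L (lborel \<Otimes>\<^sub>M lborel) (\<lambda>z. f (fst z) * g (snd z)) = integral\<^sup>L lborel f * integral\<^sup>L lborel g"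
    using lborel_pair.integral_fst'[OF I, symmetric] by simp
qed



lemma nd_affine:
  assumes "s > 0"
  shows "normal_density m s (m + s * x) = std_normal_density x / s"
  using assms by (simp add: normal_density_def real_sqrt_mult power_mult_distrib field_simps)

lemma fourier_normal:
  assumes s: "s > 0"
  shows "(LINT q|lborel. cis (p * q) * complex_of_real (normal_density m s q))
       = cis (p * m) * complex_of_real (exp (- (p * s)\<^sup>2 / 2))"
proof -
  have "(LINT q|lborel. cis (p * q) * complex_of_real (normal_density m s q))
      = \<bar>s\<bar> *\<^sub>R (LINT x|lborel. cis (p * (m + s * x)) * complex_of_real (normal_density m s (m + s * x)))"
    using s by (intro lborel_integral_real_affine) simp
  also have "\<dots> = (LINT x|lborel. \<bar>s\<bar> *\<^sub>R (cis (p * (m + s * x)) * complex_of_real (normal_density m s (m + s * x))))"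
    by (rule integral_scaleR_right[symmetric])
  also have "\<dots> = (LINT x|lborel. cis (p * m) * (cis ((p * s) * x) * complex_of_real (std_normal_density x)))"
  proof (rule arg_cong[where f="integral\<^sup>L lborel"], rule ext)
    fix x
    have c: "cis (p * (m + s * x)) = cis (p * m) * cis ((p * s) * x)"
      by (simp add: cis_mult distrib_left mult_ac)
    show "\<bar>s\<bar> *\<^sub>R (cis (p * (m + s * x)) * complex_of_real (normal_density m s (m + s * x)))
        = cis (p * m) * (cis ((p * s) * x) * complex_of_real (std_normal_density x))"
      unfolding c nd_affine[OF s] using s by (simp add: scaleR_conv_of_real)
  qed
  also have "\<dots> = cis (p * m) * (LINT x|lborel. cis ((p * s) * x) * complex_of_real (std_normal_density x))"
    by (rule integral_mult_right_zero)
  also have "(LINT x|lborel. cis ((p * s) * x) * complex_of_real (std_normal_density x)) = char std_normal_distribution (p * s)"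
    unfolding char_def
    by (subst integral_density) (auto simp: cis_conv_exp scaleR_conv_of_real mult_ac)
  also have "\<dots> = complex_of_real (exp (- (p * s)\<^sup>2 / 2))"
    by (simp add: char_std_normal_distribution)
  finally show ?thesis .
qed

lemma pointwise_unfold:
  fixes r q :: real and \<alpha> \<beta> :: complex
  defines "e \<equiv> exp r"
  defines "qa \<equiv> sqrt 2 * Re \<alpha>" and "pa \<equiv> sqrt 2 * Im \<alpha>" and "qb \<equiv> sqrt 2 * Re \<beta>" and "pb \<equiv> sqrt 2 * Im \<beta>"
  shows "cnj (coherent \<beta> q) * displace \<alpha> (squeeze r vac) q =
       cis ((pa * q - pa * qa / 2) - (pb * q - pb * qb / 2)) *
       complex_of_real (pi powr (-1/4) * exp (-((q - qb)\<^sup>2) / 2) * exp (r/2) * (pi powr (-1/4) * exp (-((e * (q - qa))\<^sup>2) / 2)))"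
proof -
  have c1: "coherent \<beta> q = cis (pb * q - pb * qb / 2) * complex_of_real (pi powr (-1/4) * exp (-((q - qb)\<^sup>2) / 2))"
    by (simp add: coherent_def displace_def vac_def Let_def qb_def pb_def)
  have c2: "displace \<alpha> (squeeze r vac) q = cis (pa * q - pa * qa / 2) * (complex_of_real (exp (r/2)) * complex_of_real (pi powr (-1/4) * exp (-((e * (q - qa))\<^sup>2) / 2)))"
    by (simp add: squeeze_def displace_def vac_def Let_def qa_def pa_def e_def right_diff_distrib)
  have c3: "cis ((pa * q - pa * qa / 2) - (pb * q - pb * qb / 2)) = cis (pa * q - pa * qa / 2) * cnj (cis (pb * q - pb * qb / 2))"
    by (simp add: cis_cnj cis_mult) (rule arg_cong[where f=cis], simp)
  show ?thesis unfolding c1 c2 c3 of_real_mult complex_cnj_mult complex_cnj_complex_of_real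
    by (simp only: mult_ac)
qed

lemma gauss_exp_id:
  fixes k q qa qb :: real
  assumes "k > 0"
  shows "-((q-qb)\<^sup>2)/2 + -(k*(q-qa)\<^sup>2)/2 = -k*(qa-qb)\<^sup>2/(2*(1+k)) + -(q - (qb+k*qa)/(1+k))\<^sup>2/(2*(1/(1+k)))"
proof -
  define u where "u = (1+k)*q - qb - k*qa"
  have k1: "1 + k > 0" using assms by simp
  have "q - (qb+k*qa)/(1+k) = u/(1+k)" using k1 by (simp add: field_simps u_def)
  then have e1: "-(q - (qb+k*qa)/(1+k))\<^sup>2/(2*(1/(1+k))) = -u\<^sup>2/(2*(1+k))"
    using k1 by (simp add: power_divide power2_eq_square)
  have poly: "(1+k)*((q-qb)\<^sup>2 + k*(q-qa)\<^sup>2) = k*(qa-qb)\<^sup>2 + u\<^sup>2"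
    unfolding u_def by (simp add: power2_eq_square algebra_simps)
  have "-((q-qb)\<^sup>2)/2 + -(k*(q-qa)\<^sup>2)/2 = -((1+k)*((q-qb)\<^sup>2 + k*(q-qa)\<^sup>2))/(2*(1+k))"
    using k1 by (simp add: field_simps)
  also have "\<dots> = -k*(qa-qb)\<^sup>2/(2*(1+k)) + - u\<^sup>2/(2*(1+k))"
    unfolding poly by (simp add: add_divide_distrib diff_divide_distrib)
  finally show ?thesis by (simp only: e1)
qed

lemma likelihood_eq:
  "likelihood r \<beta> \<alpha> =
     normal_density (Re \<beta>) (sqrt (1 + (exp r)\<^sup>2) / (2 * exp r)) (Re \<alpha>) *
     normal_density (Im \<beta>) (sqrt (1 + (exp r)\<^sup>2) / 2) (Im \<alpha>)"
proof -
  define e where "e = exp r"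
  define k where "k = e\<^sup>2"
  define qa where "qa = sqrt 2 * Re \<alpha>"
  define pa where "pa = sqrt 2 * Im \<alpha>"
  define qb where "qb = sqrt 2 * Re \<beta>"
  define pb where "pb = sqrt 2 * Im \<beta>"
  define p where "p = pa - pb"
  define d where "d = qa - qb"
  define m where "m = (qb + k * qa) / (1 + k)"
  define s where "s = 1 / sqrt (1 + k)"
  define c0 where "c0 = pb * qb / 2 - pa * qa / 2"
  define R0 where "R0 = exp (r/2) * (pi powr (-1/4) * pi powr (-1/4)) * exp (- k * d\<^sup>2 / (2 * (1 + k))) * (sqrt (2 * pi) * s)"
  have e0: "e > 0" by (simp add: e_def)
  have k0: "k > 0" using e0 by (simp add: k_def)
  have s0: "s > 0" using k0 by (simp add: s_def)
  have s2: "s\<^sup>2 = 1 / (1 + k)" using k0 by (simp add: s_def power_divide)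
  have R00: "R0 > 0" using s0 by (simp add: R0_def)
  have pw: "(pi powr (-1/4) * pi powr (-1/4))\<^sup>2 = 1 / pi"
  proof -
    have a: "pi powr (-1/4) * pi powr (-1/4) = pi powr (-1/2)"
      using powr_add[of pi "-1/4" "-1/4", symmetric] by simp
    have b: "pi powr (-1/2) * pi powr (-1/2) = pi powr (-1)"
      using powr_add[of pi "-1/2" "-1/2", symmetric] by simp
    show ?thesis unfolding power2_eq_square a b by (simp add: powr_minus divide_inverse)
  qed
  have er: "(exp (r/2))\<^sup>2 = e"
    by (simp add: e_def power2_eq_square exp_add[symmetric])
  have pointwise: "cnj (coherent \<beta> q) * displace \<alpha> (squeeze r vac) q
      = (cis c0 * complex_of_real R0) * (cis (p * q) * complex_of_real (normal_density m s q))" for q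
  proof -
    have h1: "cnj (coherent \<beta> q) * displace \<alpha> (squeeze r vac) q =
       cis ((pa * q - pa * qa / 2) - (pb * q - pb * qb / 2)) *
       complex_of_real (pi powr (-1/4) * exp (-((q - qb)\<^sup>2) / 2) * exp (r/2) * (pi powr (-1/4) * exp (-((e * (q - qa))\<^sup>2) / 2)))"
      unfolding qa_def pa_def qb_def pb_def e_def by (rule pointwise_unfold)
    have A: "(pa * q - pa * qa / 2) - (pb * q - pb * qb / 2) = c0 + p * q"
      by (simp add: c0_def p_def algebra_simps)
    have ex: "exp (-((q - qb)\<^sup>2) / 2) * exp (-((e * (q - qa))\<^sup>2) / 2)
        = exp (- k * d\<^sup>2 / (2 * (1 + k))) * exp (-(q - m)\<^sup>2 / (2 * s\<^sup>2))"
    proof -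
      have "-((q - qb)\<^sup>2) / 2 + -((e * (q - qa))\<^sup>2) / 2 = - k * d\<^sup>2 / (2 * (1 + k)) + -(q - m)\<^sup>2 / (2 * s\<^sup>2)"
        using gauss_exp_id[OF k0, of q qb qa] unfolding s2 m_def d_def
        by (simp add: power_mult_distrib k_def)
      then show ?thesis by (simp add: exp_add[symmetric])
    qed
    have sq: "sqrt (2 * pi) * s * (1 / sqrt (2 * pi * s\<^sup>2)) = 1"
      using s0 by (simp add: real_sqrt_mult)
    have B: "pi powr (-1/4) * exp (-((q - qb)\<^sup>2) / 2) * exp (r/2) * (pi powr (-1/4) * exp (-((e * (q - qa))\<^sup>2) / 2))
        = R0 * normal_density m s q"
    proof -
      have "pi powr (-1/4) * exp (-((q - qb)\<^sup>2) / 2) * exp (r/2) * (pi powr (-1/4) * exp (-((e * (q - qa))\<^sup>2) / 2))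
          = exp (r/2) * (pi powr (-1/4) * pi powr (-1/4)) * (exp (-((q - qb)\<^sup>2) / 2) * exp (-((e * (q - qa))\<^sup>2) / 2))"
        by (simp add: mult_ac)
      also have "\<dots> = exp (r/2) * (pi powr (-1/4) * pi powr (-1/4)) * exp (- k * d\<^sup>2 / (2 * (1 + k))) * (sqrt (2 * pi) * s * (1 / sqrt (2 * pi * s\<^sup>2))) * exp (-(q - m)\<^sup>2 / (2 * s\<^sup>2))"
        unfolding ex sq by simp
      also have "\<dots> = R0 * normal_density m s q"
        by (simp add: R0_def normal_density_def mult_ac)
      finally show ?thesis .
    qed
    show ?thesis unfolding h1 A B
      by (simp add: cis_mult[symmetric] mult_ac)
  qed
  have br: "braket (coherent \<beta>) (displace \<alpha> (squeeze r vac)) =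
      (cis c0 * complex_of_real R0) * (cis (p * m) * complex_of_real (exp (- (p * s)\<^sup>2 / 2)))"
    unfolding braket_def pointwise integral_mult_right_zero fourier_normal[OF s0] ..
  have cm: "cmod (braket (coherent \<beta>) (displace \<alpha> (squeeze r vac))) = R0 * exp (- (p * s)\<^sup>2 / 2)"
    unfolding br using R00 by (simp add: norm_mult)
  have L: "likelihood r \<beta> \<alpha> = 2 * e / (pi * (1 + k)) * exp (- (k * d\<^sup>2 + p\<^sup>2) / (1 + k))"
  proof -
    have "likelihood r \<beta> \<alpha> = 1 / pi * (R0 * exp (- (p * s)\<^sup>2 / 2))\<^sup>2"
      unfolding likelihood_def cm ..
    also have "\<dots> = 1 / pi * ((exp (r/2))\<^sup>2 * (pi powr (-1/4) * pi powr (-1/4))\<^sup>2 * (2 * pi * s\<^sup>2)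
         * ((exp (- k * d\<^sup>2 / (2 * (1 + k))))\<^sup>2 * (exp (- (p * s)\<^sup>2 / 2))\<^sup>2))"
      by (simp add: R0_def power_mult_distrib mult_ac)
    also have "(exp (- k * d\<^sup>2 / (2 * (1 + k))))\<^sup>2 * (exp (- (p * s)\<^sup>2 / 2))\<^sup>2 = exp (- (k * d\<^sup>2 + p\<^sup>2) / (1 + k))"
    proof -
      have "(exp (- k * d\<^sup>2 / (2 * (1 + k))))\<^sup>2 * (exp (- (p * s)\<^sup>2 / 2))\<^sup>2
          = exp (- k * d\<^sup>2 / (2 * (1 + k)) + - k * d\<^sup>2 / (2 * (1 + k)) + (- (p * s)\<^sup>2 / 2 + - (p * s)\<^sup>2 / 2))"
      proof -
        have sqe: "(exp x)\<^sup>2 = exp (x + x)" for x :: real by (simp add: power2_eq_square exp_add[symmetric])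
        show ?thesis by (simp only: sqe exp_add[symmetric])
      qed
      also have "- k * d\<^sup>2 / (2 * (1 + k)) + - k * d\<^sup>2 / (2 * (1 + k)) + (- (p * s)\<^sup>2 / 2 + - (p * s)\<^sup>2 / 2)
          = - (k * d\<^sup>2 + p\<^sup>2) / (1 + k)"
      proof -
        have aux: "2 * x / (2 + 2 * k) = x / (1 + k)" "2 * x / (2 + k * 2) = x / (1 + k)" for x
        proof -
          have h1: "2 + 2 * k = 2 * (1 + k)" and h2: "2 + k * 2 = 2 * (1 + k)" by simp_all
          show "2 * x / (2 + 2 * k) = x / (1 + k)" unfolding h1 by (rule mult_divide_mult_cancel_left) simp
          show "2 * x / (2 + k * 2) = x / (1 + k)" unfolding h2 by (rule mult_divide_mult_cancel_left) simp
        qed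
        show ?thesis
          using k0 by (simp add: power_mult_distrib s2 add_divide_distrib diff_divide_distrib) (simp add: aux)
      qed
      finally show ?thesis .
    qed
    finally show ?thesis using k0 unfolding er pw s2 by (simp add: field_simps)
  qed
  have R: "normal_density (Re \<beta>) (sqrt (1 + (exp r)\<^sup>2) / (2 * exp r)) (Re \<alpha>) *
     normal_density (Im \<beta>) (sqrt (1 + (exp r)\<^sup>2) / 2) (Im \<alpha>)
     = 2 * e / (pi * (1 + k)) * exp (- (k * d\<^sup>2 + p\<^sup>2) / (1 + k))"
  proof -
    have d2: "d\<^sup>2 = 2 * (Re \<alpha> - Re \<beta>)\<^sup>2"
      by (simp add: d_def qa_def qb_def right_diff_distrib[symmetric] power_mult_distrib)
    have p2: "p\<^sup>2 = 2 * (Im \<alpha> - Im \<beta>)\<^sup>2"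
      by (simp add: p_def pa_def pb_def right_diff_distrib[symmetric] power_mult_distrib)
    have sR: "(sqrt (1 + k) / (2 * e))\<^sup>2 = (1 + k) / (4 * k)"
      using k0 by (simp add: power_divide power_mult_distrib k_def)
    have sI: "(sqrt (1 + k) / 2)\<^sup>2 = (1 + k) / 4"
      using k0 by (simp add: power_divide)
    have pre: "1 / sqrt (2 * pi * ((1 + k) / (4 * k))) * (1 / sqrt (2 * pi * ((1 + k) / 4))) = 2 * e / (pi * (1 + k))"
    proof -
      have "sqrt (2 * pi * ((1 + k) / (4 * k))) * sqrt (2 * pi * ((1 + k) / 4)) = sqrt ((pi * (1 + k) / (2 * e))\<^sup>2)"
        using k0 e0 by (simp add: real_sqrt_mult[symmetric] k_def power_divide power_mult_distrib field_simps) (simp add: power2_eq_square algebra_simps eval_nat_numeral)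
      also have "\<dots> = pi * (1 + k) / (2 * e)" using k0 e0 by simp
      finally have P: "sqrt (2 * pi * ((1 + k) / (4 * k))) * sqrt (2 * pi * ((1 + k) / 4)) = pi * (1 + k) / (2 * e)" .
      have "1 / sqrt (2 * pi * ((1 + k) / (4 * k))) * (1 / sqrt (2 * pi * ((1 + k) / 4)))
          = 1 / (sqrt (2 * pi * ((1 + k) / (4 * k))) * sqrt (2 * pi * ((1 + k) / 4)))"
        by (simp only: divide_inverse mult_1 inverse_mult_distrib)
      also have "\<dots> = 1 / (pi * (1 + k) / (2 * e))" by (simp only: P)
      also have "\<dots> = 2 * e / (pi * (1 + k))" by simp
      finally show ?thesis .
    qed
    have ex: "exp (- (Re \<alpha> - Re \<beta>)\<^sup>2 / (2 * ((1 + k) / (4 * k)))) * exp (- (Im \<alpha> - Im \<beta>)\<^sup>2 / (2 * ((1 + k) / 4)))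
        = exp (- (k * d\<^sup>2 + p\<^sup>2) / (1 + k))"
    proof -
      have a1: "- (Re \<alpha> - Re \<beta>)\<^sup>2 / (2 * ((1 + k) / (4 * k))) = - (k * (2 * (Re \<alpha> - Re \<beta>)\<^sup>2)) / (1 + k)"
        using k0 by (simp add: field_simps)
      have a2: "- (Im \<alpha> - Im \<beta>)\<^sup>2 / (2 * ((1 + k) / 4)) = - (2 * (Im \<alpha> - Im \<beta>)\<^sup>2) / (1 + k)"
        using k0 by (simp add: field_simps)
      show ?thesis
        unfolding exp_add[symmetric] d2 p2 a1 a2 by (simp add: add_divide_distrib diff_divide_distrib)
    qed
    have "normal_density (Re \<beta>) (sqrt (1 + (exp r)\<^sup>2) / (2 * exp r)) (Re \<alpha>) *
        normal_density (Im \<beta>) (sqrt (1 + (exp r)\<^sup>2) / 2) (Im \<alpha>)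
      = (1 / sqrt (2 * pi * ((1 + k) / (4 * k))) * (1 / sqrt (2 * pi * ((1 + k) / 4)))) *
        (exp (- (Re \<alpha> - Re \<beta>)\<^sup>2 / (2 * ((1 + k) / (4 * k)))) * exp (- (Im \<alpha> - Im \<beta>)\<^sup>2 / (2 * ((1 + k) / 4))))"
      unfolding normal_density_def e_def[symmetric] k_def[symmetric] sR sI by (simp only: mult_ac)
    also have "\<dots> = 2 * e / (pi * (1 + k)) * exp (- (k * d\<^sup>2 + p\<^sup>2) / (1 + k))"
      by (simp only: pre ex)
    finally show ?thesis .
  qed
  show ?thesis by (rule trans[OF L R[symmetric]])
qed



lemma nd_exp_id:
  fixes A B a b x :: real
  assumes A: "A > 0" and B: "B > 0"
  shows "-(x-a)\<^sup>2/(2*A) + -(x-b)\<^sup>2/(2*B) = -(b-a)\<^sup>2/(2*(A+B)) + -(x - (a*B+b*A)/(A+B))\<^sup>2/(2*(A*B/(A+B)))"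
proof -
  define u where "u = (A+B)*x - a*B - b*A"
  have AB: "A + B > 0" using A B by simp
  have xm: "x - (a*B+b*A)/(A+B) = u/(A+B)" using AB by (simp add: field_simps u_def)
  have e1: "-(x - (a*B+b*A)/(A+B))\<^sup>2/(2*(A*B/(A+B))) = -u\<^sup>2/(2*A*B*(A+B))"
  proof -
    have gen: "-(w/K)\<^sup>2/(2*(P/K)) = -w\<^sup>2/(2*P*K)" if "K > 0" "P > 0" for w K P :: real
      using that by (simp add: power2_eq_square field_simps)
    show ?thesis unfolding xm using gen[of "A+B" "A*B" u] AB A B by (simp add: mult.assoc)
  qed
  have poly: "(A+B)*(B*(x-a)\<^sup>2 + A*(x-b)\<^sup>2) = A*B*(b-a)\<^sup>2 + u\<^sup>2"
    unfolding u_def by (simp add: power2_eq_square algebra_simps)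
  have "-(x-a)\<^sup>2/(2*A) + -(x-b)\<^sup>2/(2*B) = -((A+B)*(B*(x-a)\<^sup>2 + A*(x-b)\<^sup>2))/(2*A*B*(A+B))"
  proof -
    have g2: "-(x-a)\<^sup>2/(2*A) + -(x-b)\<^sup>2/(2*B) = -(B*(x-a)\<^sup>2 + A*(x-b)\<^sup>2)/(2*A*B)"
      using A B by (simp add: field_simps)
    have g3: "-((A+B)*(B*(x-a)\<^sup>2 + A*(x-b)\<^sup>2))/(2*A*B*(A+B)) = -(B*(x-a)\<^sup>2 + A*(x-b)\<^sup>2)/(2*A*B)"
    proof -
      have "2*A*B*(A+B) = (A+B)*(2*A*B)" by (simp only: mult_ac)
      then show ?thesis using AB by (simp only: minus_divide_left[symmetric]) simp
    qed
    show ?thesis unfolding g2 g3 ..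
  qed
  also have "\<dots> = -(A*B*(b-a)\<^sup>2)/(2*A*B*(A+B)) + - u\<^sup>2/(2*A*B*(A+B))"
    unfolding poly by (simp add: add_divide_distrib diff_divide_distrib)
  also have "-(A*B*(b-a)\<^sup>2)/(2*A*B*(A+B)) = -(b-a)\<^sup>2/(2*(A+B))"
    using A B by simp
  finally show ?thesis by (simp only: e1)
qed

lemma nd_prod:
  assumes s1: "s1 > 0" and s2: "s2 > 0"
  shows "normal_density a s1 x * normal_density b s2 x =
     normal_density a (sqrt (s1\<^sup>2 + s2\<^sup>2)) b *
     normal_density ((a * s2\<^sup>2 + b * s1\<^sup>2) / (s1\<^sup>2 + s2\<^sup>2)) (sqrt (s1\<^sup>2 * s2\<^sup>2 / (s1\<^sup>2 + s2\<^sup>2))) x"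
proof -
  define A where "A = s1\<^sup>2"
  define B where "B = s2\<^sup>2"
  have A0: "A > 0" and B0: "B > 0" using s1 s2 by (simp_all add: A_def B_def)
  have sq1: "(sqrt (A + B))\<^sup>2 = A + B" using A0 B0 by simp
  have sq2: "(sqrt (A * B / (A + B)))\<^sup>2 = A * B / (A + B)" using A0 B0 by simp
  have pre: "1 / sqrt (2 * pi * A) * (1 / sqrt (2 * pi * B)) = 1 / sqrt (2 * pi * (A + B)) * (1 / sqrt (2 * pi * (A * B / (A + B))))"
  proof -
    have "(2 * pi * A) * (2 * pi * B) = (2 * pi * (A + B)) * (2 * pi * (A * B / (A + B)))"
      using A0 B0 by (simp add: field_simps)
    then have "sqrt (2 * pi * A) * sqrt (2 * pi * B) = sqrt (2 * pi * (A + B)) * sqrt (2 * pi * (A * B / (A + B)))"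
      by (simp only: real_sqrt_mult[symmetric])
    then show ?thesis by (simp only: divide_inverse mult_1 inverse_mult_distrib[symmetric])
  qed
  have ex: "exp (-(x-a)\<^sup>2/(2*A)) * exp (-(x-b)\<^sup>2/(2*B)) = exp (-(b-a)\<^sup>2/(2*(A+B))) * exp (-(x - (a*B+b*A)/(A+B))\<^sup>2/(2*(A*B/(A+B))))"
    unfolding exp_add[symmetric] nd_exp_id[OF A0 B0] ..
  have "normal_density a s1 x * normal_density b s2 x
      = (1 / sqrt (2 * pi * A) * (1 / sqrt (2 * pi * B))) * (exp (-(x-a)\<^sup>2/(2*A)) * exp (-(x-b)\<^sup>2/(2*B)))"
    unfolding normal_density_def A_def B_def by (simp only: mult_ac)
  also have "\<dots> = (1 / sqrt (2 * pi * (A + B)) * (1 / sqrt (2 * pi * (A * B / (A + B))))) *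
      (exp (-(b-a)\<^sup>2/(2*(A+B))) * exp (-(x - (a*B+b*A)/(A+B))\<^sup>2/(2*(A*B/(A+B)))))"
    by (simp only: pre ex)
  also have "\<dots> = normal_density a (sqrt (A + B)) b * normal_density ((a * B + b * A) / (A + B)) (sqrt (A * B / (A + B))) x"
    unfolding normal_density_def sq1 sq2 by (simp only: mult_ac)
  finally show ?thesis unfolding A_def B_def .
qed

lemma nd_sym: "normal_density a s b = normal_density b s a"
  by (simp add: normal_density_def power2_commute)

lemma prior_eq: 
  assumes "\<sigma>0 > 0"
  shows "prior \<sigma>0 \<alpha>0 \<alpha> = normal_density (Re \<alpha>0) \<sigma>0 (Re \<alpha>) * normal_density (Im \<alpha>0) \<sigma>0 (Im \<alpha>)"
proof -
  have sq: "sqrt (2 * pi * \<sigma>0\<^sup>2) * sqrt (2 * pi * \<sigma>0\<^sup>2) = 2 * pi * \<sigma>0\<^sup>2"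
    by simp
  have pre: "1 / sqrt (2 * pi * \<sigma>0\<^sup>2) * (1 / sqrt (2 * pi * \<sigma>0\<^sup>2)) = 1 / (2 * pi * \<sigma>0\<^sup>2)"
  proof -
    have "1 / sqrt (2 * pi * \<sigma>0\<^sup>2) * (1 / sqrt (2 * pi * \<sigma>0\<^sup>2)) = 1 / (sqrt (2 * pi * \<sigma>0\<^sup>2) * sqrt (2 * pi * \<sigma>0\<^sup>2))"
      by (simp only: divide_inverse mult_1 inverse_mult_distrib)
    then show ?thesis by (simp only: sq)
  qed
  have ex: "exp (- (Re \<alpha> - Re \<alpha>0)\<^sup>2 / (2 * \<sigma>0\<^sup>2)) * exp (- (Im \<alpha> - Im \<alpha>0)\<^sup>2 / (2 * \<sigma>0\<^sup>2)) = exp (- (cmod (\<alpha> - \<alpha>0))\<^sup>2 / (2 * \<sigma>0\<^sup>2))"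
    unfolding exp_add[symmetric] cmod_power2 by (simp add: add_divide_distrib diff_divide_distrib)
  have "normal_density (Re \<alpha>0) \<sigma>0 (Re \<alpha>) * normal_density (Im \<alpha>0) \<sigma>0 (Im \<alpha>)
     = (1 / sqrt (2 * pi * \<sigma>0\<^sup>2) * (1 / sqrt (2 * pi * \<sigma>0\<^sup>2))) * (exp (- (Re \<alpha> - Re \<alpha>0)\<^sup>2 / (2 * \<sigma>0\<^sup>2)) * exp (- (Im \<alpha> - Im \<alpha>0)\<^sup>2 / (2 * \<sigma>0\<^sup>2)))"
    unfolding normal_density_def by (simp only: mult_ac)
  also have "\<dots> = prior \<sigma>0 \<alpha>0 \<alpha>" unfolding pre ex prior_def ..
  finally show ?thesis ..
qed


lemma int_sep:
  fixes f g :: "real \<Rightarrow> real"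
  assumes f: "integrable lborel f" and g: "integrable lborel g"
  shows "integrable lborel (\<lambda>z::complex. f (Re z) * g (Im z))"
    and "(LINT z|lborel. f (Re z) * g (Im z)) = integral\<^sup>L lborel f * integral\<^sup>L lborel g"
proof -
  have [measurable]: "f \<in> borel_measurable borel" "g \<in> borel_measurable borel"
    using f g by auto
  have m: "(\<lambda>z::complex. f (Re z) * g (Im z)) \<in> borel_measurable borel" by measurable
  show "integrable lborel (\<lambda>z::complex. f (Re z) * g (Im z))"
    by (subst lborel_complex_distr, subst integrable_distr_eq[OF Complex_pair_measurable m])
       (simp add: integral_product(1)[OF f g])
  show "(LINT z|lborel. f (Re z) * g (Im z)) = integral\<^sup>L lborel f * integral\<^sup>L lborel g"
    by (subst integral_complex_pair[OF m]) (simp add: integral_product(2)[OF f g])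
qed



lemma mean_param:
  fixes a b \<sigma> E :: real
  assumes "\<sigma> > 0" "E > 0"
  shows "(b * \<sigma>\<^sup>2 + a * ((1 + E) / 4)) / ((1 + E) / 4 + \<sigma>\<^sup>2) = (4 * b * \<sigma>\<^sup>2 + a * (1 + E)) / (4 * \<sigma>\<^sup>2 + 1 + E)"
proof -
  have p: "4 * \<sigma>\<^sup>2 + 1 + E > 0" using assms by (simp add: add_pos_pos)
  have q: "(1 + E) / 4 + \<sigma>\<^sup>2 > 0" using assms by (simp add: add_pos_pos)
  show ?thesis using p q by (simp add: field_simps)
qed

lemma var_param:
  fixes \<sigma> E :: real
  assumes "\<sigma> > 0" "E > 0"
  shows "(1 + E) / 4 * \<sigma>\<^sup>2 / ((1 + E) / 4 + \<sigma>\<^sup>2) = 1 / (1 / \<sigma>\<^sup>2 + 4 / (1 + E))"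
proof -
  have q: "(1 + E) / 4 + \<sigma>\<^sup>2 > 0" using assms by (simp add: add_pos_pos)
  show ?thesis using q assms by (simp add: field_simps)
qed

lemma tanh_facts:
  fixes r :: real
  shows "2 * (1 + tanh r) = 4 / (1 + exp (-2 * r))" and "2 * (1 - tanh r) = 4 / (1 + exp (2 * r))"
proof -
  have a: "1 + exp (-2 * r) > 0" by (simp add: add_pos_pos)
  show "2 * (1 + tanh r) = 4 / (1 + exp (-2 * r))"
    unfolding tanh_real_altdef using a by (simp add: field_simps)
  have m: "exp (-2 * r) * exp (2 * r) = 1" by (simp add: exp_add[symmetric])
  have b: "1 + exp (2 * r) > 0" by (simp add: add_pos_pos)
  have "1 - tanh r = 2 * exp (-2 * r) / (1 + exp (-2 * r))"
    unfolding tanh_real_altdef using a by (simp add: field_simps)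
  also have "\<dots> = 2 / (1 + exp (2 * r))"
    using a b m by (simp add: field_simps)
  finally show "2 * (1 - tanh r) = 4 / (1 + exp (2 * r))" by simp
qed

lemma final_ineq:
  fixes a t :: real
  assumes "a > 0" "\<bar>t\<bar> < 1"
  shows "1 / (a + 2 * (1 + 0)) + 1 / (a + 2 * (1 - 0)) \<le> 1 / (a + 2 * (1 + t)) + 1 / (a + 2 * (1 - t))"
proof -
  define A where "A = a + 2"
  have A: "A > 2 * \<bar>t\<bar>" using assms by (simp add: A_def)
  have p1: "A + 2 * t > 0" "A - 2 * t > 0" using A by auto
  have "2 / A \<le> 1 / (A + 2 * t) + 1 / (A - 2 * t)"
  proof -
    have "1 / (A + 2 * t) + 1 / (A - 2 * t) = 2 * A / ((A + 2 * t) * (A - 2 * t))"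
      using p1 by (simp add: field_simps)
    also have "\<dots> \<ge> 2 * A / (A * A)"
    proof -
      have "\<bar>2*t\<bar> * \<bar>2*t\<bar> < A * A" using A by (intro mult_strict_mono) auto
      then have sq: "(2*t) * (2*t) < A * A" by (simp only: abs_mult_self_eq)
      have "(A + 2 * t) * (A - 2 * t) \<le> A * A" using sq by (simp add: algebra_simps)
      moreover have "(A + 2 * t) * (A - 2 * t) > 0" using p1 by simp
      moreover have "2 * A \<ge> 0" using A by simp
      ultimately show ?thesis by (intro divide_left_mono) auto
    qed
    also have "2 * A / (A * A) = 2 / A" using A by simp
    finally show ?thesis .
  qed
  then show ?thesis by (simp add: A_def algebra_simps)
qed

lemma main_r:
  fixes r \<sigma>0 :: real and \<alpha>0 :: complex
  assumes s0: "\<sigma>0 > 0"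
  shows
    "(\<forall>\<beta> \<alpha>. posterior r \<sigma>0 \<alpha>0 \<beta> \<alpha> =
        normal_density
          ((4 * Re \<beta> * \<sigma>0\<^sup>2 + Re \<alpha>0 * (1 + exp (-2 * r))) / (4 * \<sigma>0\<^sup>2 + 1 + exp (-2 * r)))
          (sqrt (1 / (1 / \<sigma>0\<^sup>2 + 2 * (1 + tanh r)))) (Re \<alpha>)
      * normal_density
          ((4 * Im \<beta> * \<sigma>0\<^sup>2 + Im \<alpha>0 * (1 + exp (2 * r))) / (4 * \<sigma>0\<^sup>2 + 1 + exp (2 * r)))
          (sqrt (1 / (1 / \<sigma>0\<^sup>2 + 2 * (1 - tanh r)))) (Im \<alpha>))
   \<and> (\<forall>\<beta>. post_mean r \<sigma>0 \<alpha>0 \<beta> =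
        Complex ((4 * Re \<beta> * \<sigma>0\<^sup>2 + Re \<alpha>0 * (1 + exp (-2 * r))) / (4 * \<sigma>0\<^sup>2 + 1 + exp (-2 * r)))
                ((4 * Im \<beta> * \<sigma>0\<^sup>2 + Im \<alpha>0 * (1 + exp (2 * r))) / (4 * \<sigma>0\<^sup>2 + 1 + exp (2 * r))))
   \<and> (\<forall>\<beta>. post_var r \<sigma>0 \<alpha>0 \<beta> =
        1 / (1 / \<sigma>0\<^sup>2 + 2 * (1 + tanh r)) + 1 / (1 / \<sigma>0\<^sup>2 + 2 * (1 - tanh r)))
   \<and> avg_post_var r \<sigma>0 \<alpha>0 = 1 / (1 / \<sigma>0\<^sup>2 + 2 * (1 + tanh r)) + 1 / (1 / \<sigma>0\<^sup>2 + 2 * (1 - tanh r))"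
proof -
  define e where "e = exp r"
  define sR where "sR = sqrt (1 + e\<^sup>2) / (2 * e)"
  define sI where "sI = sqrt (1 + e\<^sup>2) / 2"
  have e0: "e > 0" by (simp add: e_def)
  have sq0: "sqrt (1 + e\<^sup>2) > 0" by (simp add: add_pos_nonneg)
  have sR0: "sR > 0" using e0 sq0 by (simp add: sR_def)
  have sI0: "sI > 0" using sq0 by (simp add: sI_def)
  have sq2: "(sqrt (1 + e\<^sup>2))\<^sup>2 = 1 + e\<^sup>2" by (simp add: add_nonneg_nonneg)
  have e2: "e\<^sup>2 = exp (2 * r)" by (simp add: e_def power2_eq_square exp_add[symmetric])
  have em: "exp (-2 * r) * exp (2 * r) = 1" by (simp add: exp_add[symmetric])
  have sR2: "sR\<^sup>2 = (1 + exp (-2 * r)) / 4"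
  proof -
    have "sR\<^sup>2 = (1 + e\<^sup>2) / (4 * e\<^sup>2)" unfolding sR_def power_divide sq2 by (simp add: power_mult_distrib)
    also have "\<dots> = (1 + exp (-2 * r)) / 4" unfolding e2 using em by (simp add: field_simps)
    finally show ?thesis .
  qed
  have sI2: "sI\<^sup>2 = (1 + exp (2 * r)) / 4"
    unfolding sI_def power_divide sq2 e2 by simp
  define cR where "cR = sqrt (sR\<^sup>2 + \<sigma>0\<^sup>2)"
  define cI where "cI = sqrt (sI\<^sup>2 + \<sigma>0\<^sup>2)"
  define tR where "tR = sqrt (sR\<^sup>2 * \<sigma>0\<^sup>2 / (sR\<^sup>2 + \<sigma>0\<^sup>2))"
  define tI where "tI = sqrt (sI\<^sup>2 * \<sigma>0\<^sup>2 / (sI\<^sup>2 + \<sigma>0\<^sup>2))"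
  define mR where "mR = (\<lambda>\<beta>::complex. (Re \<beta> * \<sigma>0\<^sup>2 + Re \<alpha>0 * sR\<^sup>2) / (sR\<^sup>2 + \<sigma>0\<^sup>2))"
  define mI where "mI = (\<lambda>\<beta>::complex. (Im \<beta> * \<sigma>0\<^sup>2 + Im \<alpha>0 * sI\<^sup>2) / (sI\<^sup>2 + \<sigma>0\<^sup>2))"
  define ER where "ER = (\<lambda>\<beta>::complex. normal_density (Re \<beta>) cR (Re \<alpha>0))"
  define EI where "EI = (\<lambda>\<beta>::complex. normal_density (Im \<beta>) cI (Im \<alpha>0))"
  have cR0: "cR > 0" using sR0 s0 by (simp add: cR_def add_pos_pos)
  have cI0: "cI > 0" using sI0 s0 by (simp add: cI_def add_pos_pos)
  have tR0: "tR > 0" using sR0 s0 by (simp add: tR_def add_pos_pos)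
  have tI0: "tI > 0" using sI0 s0 by (simp add: tI_def add_pos_pos)
  have Lk: "likelihood r \<beta> \<alpha> = normal_density (Re \<beta>) sR (Re \<alpha>) * normal_density (Im \<beta>) sI (Im \<alpha>)" for \<beta> \<alpha>
    unfolding sR_def sI_def e_def by (rule likelihood_eq)
  have Pr: "prior \<sigma>0 \<alpha>0 \<alpha> = normal_density (Re \<alpha>0) \<sigma>0 (Re \<alpha>) * normal_density (Im \<alpha>0) \<sigma>0 (Im \<alpha>)" for \<alpha>
    by (rule prior_eq[OF s0])
  have LP: "likelihood r \<beta> \<alpha> * prior \<sigma>0 \<alpha>0 \<alpha> = (ER \<beta> * EI \<beta>) * (normal_density (mR \<beta>) tR (Re \<alpha>) * normal_density (mI \<beta>) tI (Im \<alpha>))" for \<beta> \<alpha>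
  proof -
    have "likelihood r \<beta> \<alpha> * prior \<sigma>0 \<alpha>0 \<alpha> = (normal_density (Re \<beta>) sR (Re \<alpha>) * normal_density (Re \<alpha>0) \<sigma>0 (Re \<alpha>)) * (normal_density (Im \<beta>) sI (Im \<alpha>) * normal_density (Im \<alpha>0) \<sigma>0 (Im \<alpha>))"
      unfolding Lk Pr by (simp only: mult_ac)
    also have "\<dots> = (ER \<beta> * normal_density (mR \<beta>) tR (Re \<alpha>)) * (EI \<beta> * normal_density (mI \<beta>) tI (Im \<alpha>))"
      unfolding nd_prod[OF sR0 s0] nd_prod[OF sI0 s0] ER_def EI_def mR_def mI_def tR_def tI_def cR_def cI_def ..
    also have "\<dots> = (ER \<beta> * EI \<beta>) * (normal_density (mR \<beta>) tR (Re \<alpha>) * normal_density (mI \<beta>) tI (Im \<alpha>))"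
      by (simp only: mult_ac)
    finally show ?thesis .
  qed
  have Epos: "ER \<beta> * EI \<beta> > 0" for \<beta>
    using cR0 cI0 by (simp add: ER_def EI_def normal_density_pos)
  have sep1: "(LINT \<alpha>|lborel. normal_density a1 t1 (Re \<alpha>) * normal_density a2 t2 (Im \<alpha>)) = 1" if t1: "t1 > 0" and t2: "t2 > 0" for a1 a2 t1 t2
    using int_sep(2)[OF integrable_normal_density[OF t1] integrable_normal_density[OF t2]] integral_normal_density[OF t1] integral_normal_density[OF t2] by simp
  have Ev: "evidence r \<sigma>0 \<alpha>0 \<beta> = ER \<beta> * EI \<beta>" for \<beta>
    unfolding evidence_def LP integral_mult_right_zero sep1[OF tR0 tI0] by simp
  have Post: "posterior r \<sigma>0 \<alpha>0 \<beta> \<alpha> = normal_density (mR \<beta>) tR (Re \<alpha>) * normal_density (mI \<beta>) tI (Im \<alpha>)" for \<beta> \<alpha>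
  proof -
    have "ER \<beta> > 0" "EI \<beta> > 0" using cR0 cI0 by (simp_all add: ER_def EI_def normal_density_pos)
    then show ?thesis unfolding posterior_def LP Ev by simp
  qed
  have PM: "post_mean r \<sigma>0 \<alpha>0 \<beta> = Complex (mR \<beta>) (mI \<beta>)" for \<beta>
  proof -
    let ?f1 = "\<lambda>x. normal_density (mR \<beta>) tR x * x"
    let ?g1 = "normal_density (mI \<beta>) tI"
    let ?f2 = "normal_density (mR \<beta>) tR"
    let ?g2 = "\<lambda>y. normal_density (mI \<beta>) tI y * y"
    have i1: "integrable lborel ?f1" by (rule integrable_normal_moment_nz_1[OF tR0])
    have i2: "integrable lborel ?g2" by (rule integrable_normal_moment_nz_1[OF tI0])
    have eq: "(\<lambda>\<alpha>. posterior r \<sigma>0 \<alpha>0 \<beta> \<alpha> *\<^sub>R \<alpha>) = (\<lambda>\<alpha>. complex_of_real (?f1 (Re \<alpha>) * ?g1 (Im \<alpha>)) + \<i> * complex_of_real (?f2 (Re \<alpha>) * ?g2 (Im \<alpha>)))"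
      by (rule ext) (simp add: Post complex_eq_iff)
    have I1: "integrable lborel (\<lambda>\<alpha>::complex. complex_of_real (?f1 (Re \<alpha>) * ?g1 (Im \<alpha>)))"
      unfolding complex_of_real_integrable_eq using int_sep(1)[OF i1 integrable_normal_density[OF tI0]] .
    have I2: "integrable lborel (\<lambda>\<alpha>::complex. \<i> * complex_of_real (?f2 (Re \<alpha>) * ?g2 (Im \<alpha>)))"
      by (intro integrable_mult_right) (unfold complex_of_real_integrable_eq, rule int_sep(1)[OF integrable_normal_density[OF tR0] i2])
    have v1: "(LINT \<alpha>|lborel. ?f1 (Re \<alpha>) * ?g1 (Im \<alpha>)) = mR \<beta>"
      using int_sep(2)[OF i1 integrable_normal_density[OF tI0]] integral_normal_moment_nz_1[OF tR0] integral_normal_density[OF tI0] by simp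
    have v2: "(LINT \<alpha>|lborel. ?f2 (Re \<alpha>) * ?g2 (Im \<alpha>)) = mI \<beta>"
      using int_sep(2)[OF integrable_normal_density[OF tR0] i2] integral_normal_moment_nz_1[OF tI0] integral_normal_density[OF tR0] by simp
    show ?thesis
      unfolding post_mean_def eq Bochner_Integration.integral_add[OF I1 I2] integral_mult_right_zero integral_complex_of_real v1 v2
      by (simp add: complex_eq_iff)
  qed
  have m2: "(LINT x|lborel. normal_density \<mu> t x * (x - \<mu>)\<^sup>2) = t\<^sup>2" if "t > 0" for \<mu> t
    using integral_normal_moment_even[of t \<mu> 1] that by (simp add: eval_nat_numeral)
  have PV: "post_var r \<sigma>0 \<alpha>0 \<beta> = tR\<^sup>2 + tI\<^sup>2" for \<beta>
  proof -
    let ?f1 = "\<lambda>x. normal_density (mR \<beta>) tR x * (x - mR \<beta>)\<^sup>2"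
    let ?g1 = "normal_density (mI \<beta>) tI"
    let ?f2 = "normal_density (mR \<beta>) tR"
    let ?g2 = "\<lambda>y. normal_density (mI \<beta>) tI y * (y - mI \<beta>)\<^sup>2"
    have i1: "integrable lborel ?f1" by (rule integrable_normal_moment[OF tR0])
    have i2: "integrable lborel ?g2" by (rule integrable_normal_moment[OF tI0])
    have eq: "(\<lambda>\<alpha>. posterior r \<sigma>0 \<alpha>0 \<beta> \<alpha> * (cmod (\<alpha> - post_mean r \<sigma>0 \<alpha>0 \<beta>))\<^sup>2) = (\<lambda>\<alpha>. ?f1 (Re \<alpha>) * ?g1 (Im \<alpha>) + ?f2 (Re \<alpha>) * ?g2 (Im \<alpha>))"
      by (rule ext) (simp add: Post PM cmod_power2 algebra_simps)
    show ?thesis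
      unfolding post_var_def eq Bochner_Integration.integral_add[OF int_sep(1)[OF i1 integrable_normal_density[OF tI0]] int_sep(1)[OF integrable_normal_density[OF tR0] i2]]
        int_sep(2)[OF i1 integrable_normal_density[OF tI0]] int_sep(2)[OF integrable_normal_density[OF tR0] i2]
      using m2[OF tR0] m2[OF tI0] integral_normal_density[OF tR0] integral_normal_density[OF tI0] by simp
  qed
  have tR2: "tR\<^sup>2 = 1 / (1 / \<sigma>0\<^sup>2 + 2 * (1 + tanh r))"
  proof -
    have "tR\<^sup>2 = sR\<^sup>2 * \<sigma>0\<^sup>2 / (sR\<^sup>2 + \<sigma>0\<^sup>2)" unfolding tR_def using sR0 s0 by (simp add: add_pos_pos)
    also have "\<dots> = 1 / (1 / \<sigma>0\<^sup>2 + 4 / (1 + exp (-2 * r)))" unfolding sR2 by (rule var_param[OF s0]) simp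
    finally show ?thesis unfolding tanh_facts .
  qed
  have tI2: "tI\<^sup>2 = 1 / (1 / \<sigma>0\<^sup>2 + 2 * (1 - tanh r))"
  proof -
    have "tI\<^sup>2 = sI\<^sup>2 * \<sigma>0\<^sup>2 / (sI\<^sup>2 + \<sigma>0\<^sup>2)" unfolding tI_def using sI0 s0 by (simp add: add_pos_pos)
    also have "\<dots> = 1 / (1 / \<sigma>0\<^sup>2 + 4 / (1 + exp (2 * r)))" unfolding sI2 by (rule var_param[OF s0]) simp
    finally show ?thesis unfolding tanh_facts .
  qed
  have mReq: "mR \<beta> = (4 * Re \<beta> * \<sigma>0\<^sup>2 + Re \<alpha>0 * (1 + exp (-2 * r))) / (4 * \<sigma>0\<^sup>2 + 1 + exp (-2 * r))" for \<beta>
    unfolding mR_def sR2 by (rule mean_param[OF s0]) simp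
  have mIeq: "mI \<beta> = (4 * Im \<beta> * \<sigma>0\<^sup>2 + Im \<alpha>0 * (1 + exp (2 * r))) / (4 * \<sigma>0\<^sup>2 + 1 + exp (2 * r))" for \<beta>
    unfolding mI_def sI2 by (rule mean_param[OF s0]) simp
  have tReq: "tR = sqrt (1 / (1 / \<sigma>0\<^sup>2 + 2 * (1 + tanh r)))"
    unfolding tR2[symmetric] using tR0 by simp
  have tIeq: "tI = sqrt (1 / (1 / \<sigma>0\<^sup>2 + 2 * (1 - tanh r)))"
    unfolding tI2[symmetric] using tI0 by simp
  have AV: "avg_post_var r \<sigma>0 \<alpha>0 = tR\<^sup>2 + tI\<^sup>2"
  proof -
    have "(\<lambda>\<beta>. evidence r \<sigma>0 \<alpha>0 \<beta> * post_var r \<sigma>0 \<alpha>0 \<beta>) = (\<lambda>\<beta>. (tR\<^sup>2 + tI\<^sup>2) * (normal_density (Re \<alpha>0) cR (Re \<beta>) * normal_density (Im \<alpha>0) cI (Im \<beta>)))"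
    proof (rule ext)
      fix \<beta>
      have erq: "ER \<beta> = normal_density (Re \<alpha>0) cR (Re \<beta>)" unfolding ER_def by (rule nd_sym)
      have eiq: "EI \<beta> = normal_density (Im \<alpha>0) cI (Im \<beta>)" unfolding EI_def by (rule nd_sym)
      show "evidence r \<sigma>0 \<alpha>0 \<beta> * post_var r \<sigma>0 \<alpha>0 \<beta> = (tR\<^sup>2 + tI\<^sup>2) * (normal_density (Re \<alpha>0) cR (Re \<beta>) * normal_density (Im \<alpha>0) cI (Im \<beta>))"
        unfolding Ev PV erq eiq by (simp only: mult_ac)
    qed
    then have "avg_post_var r \<sigma>0 \<alpha>0 = (LINT \<beta>|lborel. (tR\<^sup>2 + tI\<^sup>2) * (normal_density (Re \<alpha>0) cR (Re \<beta>) * normal_density (Im \<alpha>0) cI (Im \<beta>)))"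
      unfolding avg_post_var_def by simp
    also have "\<dots> = tR\<^sup>2 + tI\<^sup>2" by (simp only: integral_mult_right_zero sep1[OF cR0 cI0] mult_1_right)
    finally show ?thesis .
  qed
  have PV': "post_var r \<sigma>0 \<alpha>0 \<beta> = 1 / (1 / \<sigma>0\<^sup>2 + 2 * (1 + tanh r)) + 1 / (1 / \<sigma>0\<^sup>2 + 2 * (1 - tanh r))" for \<beta>
    unfolding PV tR2 tI2 ..
  have AV': "avg_post_var r \<sigma>0 \<alpha>0 = 1 / (1 / \<sigma>0\<^sup>2 + 2 * (1 + tanh r)) + 1 / (1 / \<sigma>0\<^sup>2 + 2 * (1 - tanh r))"
    unfolding AV tR2 tI2 ..
  show ?thesis
    using Post PM PV' AV' unfolding mReq mIeq tReq tIeq by blast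
qed


theorem mainTheorem1:
  fixes r \<sigma>0 :: real and \<alpha>0 :: complex
  assumes "\<sigma>0 > 0"
  shows
    "(\<forall>\<beta> \<alpha>. posterior r \<sigma>0 \<alpha>0 \<beta> \<alpha> =
        normal_density
          ((4 * Re \<beta> * \<sigma>0\<^sup>2 + Re \<alpha>0 * (1 + exp (-2 * r))) / (4 * \<sigma>0\<^sup>2 + 1 + exp (-2 * r)))
          (sqrt (1 / (1 / \<sigma>0\<^sup>2 + 2 * (1 + tanh r)))) (Re \<alpha>)
      * normal_density
          ((4 * Im \<beta> * \<sigma>0\<^sup>2 + Im \<alpha>0 * (1 + exp (2 * r))) / (4 * \<sigma>0\<^sup>2 + 1 + exp (2 * r)))
          (sqrt (1 / (1 / \<sigma>0\<^sup>2 + 2 * (1 - tanh r)))) (Im \<alpha>))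
   \<and> (\<forall>\<beta>. post_mean r \<sigma>0 \<alpha>0 \<beta> =
        Complex ((4 * Re \<beta> * \<sigma>0\<^sup>2 + Re \<alpha>0 * (1 + exp (-2 * r))) / (4 * \<sigma>0\<^sup>2 + 1 + exp (-2 * r)))
                ((4 * Im \<beta> * \<sigma>0\<^sup>2 + Im \<alpha>0 * (1 + exp (2 * r))) / (4 * \<sigma>0\<^sup>2 + 1 + exp (2 * r))))
   \<and> (\<forall>\<beta>. post_var r \<sigma>0 \<alpha>0 \<beta> =
        1 / (1 / \<sigma>0\<^sup>2 + 2 * (1 + tanh r)) + 1 / (1 / \<sigma>0\<^sup>2 + 2 * (1 - tanh r)))
   \<and> (\<forall>\<beta>. post_var r \<sigma>0 \<alpha>0 \<beta> = avg_post_var r \<sigma>0 \<alpha>0)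
   \<and> avg_post_var 0 \<sigma>0 \<alpha>0 \<le> avg_post_var r \<sigma>0 \<alpha>0
   \<and> avg_post_var 0 \<sigma>0 \<alpha>0 = 2 * \<sigma>0\<^sup>2 / (1 + 2 * \<sigma>0\<^sup>2)"
proof -
  note A = main_r[OF assms, of r \<alpha>0]
  note B = main_r[OF assms, of 0 \<alpha>0]
  have av0: "avg_post_var 0 \<sigma>0 \<alpha>0 = 1 / (1 / \<sigma>0\<^sup>2 + 2 * (1 + 0)) + 1 / (1 / \<sigma>0\<^sup>2 + 2 * (1 - 0))"
    using B by simp
  have avr: "avg_post_var r \<sigma>0 \<alpha>0 = 1 / (1 / \<sigma>0\<^sup>2 + 2 * (1 + tanh r)) + 1 / (1 / \<sigma>0\<^sup>2 + 2 * (1 - tanh r))"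
    using A by blast
  have a0: "1 / \<sigma>0\<^sup>2 > 0" using assms by simp
  have t1: "\<bar>tanh r\<bar> < 1" using tanh_real_lt_1[of r] tanh_real_gt_neg1[of r] by (simp add: abs_less_iff)
  have le: "avg_post_var 0 \<sigma>0 \<alpha>0 \<le> avg_post_var r \<sigma>0 \<alpha>0"
    unfolding av0 avr by (rule final_ineq[OF a0 t1])
  have eq0: "avg_post_var 0 \<sigma>0 \<alpha>0 = 2 * \<sigma>0\<^sup>2 / (1 + 2 * \<sigma>0\<^sup>2)"
    unfolding av0 using assms by (simp add: field_simps)
  have pv: "\<forall>\<beta>. post_var r \<sigma>0 \<alpha>0 \<beta> = avg_post_var r \<sigma>0 \<alpha>0"
    using A by simp
  show ?thesis using A pv le eq0 by blast
qed

end
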